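(* Let $K=(S,L,\to)$ be a Kripke structure and $\mathcal{C}$ a colouring of $S$ such that any two states with the same colour satisfy the same atomic propositions, have the same $\mathcal{C}$-coloured traces of length two, and have the same complete $\mathcal{C}$-coloured traces of length one. Then $\mathcal{C}$ is fully consistent.
   Context: Fix a set $\mathbf{AP}$ of atomic propositions. A Kripke structure is $K=(S,L,\to)$ with $L:S\to\mathcal{P}(\mathbf{AP})$ and $\to\subseteq S\times S$ (not necessarily total); a state $s$ satisfies $p\in\mathbf{AP}$ iff $p\in L(s)$. A finite path from $s$ is a sequence $s_0,\dots,s_n$ with $s_0=s$ and $s_k\to s_{k+1}$; an infinite path is defined analogously; a path is maximal if it is infinite or its last state has no successor. A colouring is a function $\mathcal{C}$ from $S$ into an arbitrary set of colours. For a path $\pi=s_0,s_1,\dots$, $\mathcal{C}(\pi)$ is obtained from $\mathcal{C}(s_0),\mathcal{C}(s_1),\dots$ by contracting each maximal (finite or infinite) block of consecutive equal colours to a single colour; for $\pi$ a path from $s$, $\mathcal{C}(\pi)$ is a $\mathcal{C}$-coloured trace of $s$, complete if $\pi$ is maximal; its length is its number of entries. $\mathcal{C}$ is fully consistent if any two states of the same colour satisfy the same atomic propositions and have the same complete $\mathcal{C}$-coloured traces. *)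

theory Defs
  imports Main "HOL-Library.Infinite_Set" "HOL-Library.Extended_Nat"
begin

text \<open>A Kripke structure is given by a labelling L and a transition relation R on the
  state type 's (the state set S is UNIV :: 's set). A colouring is a map C :: 's => 'c.\<close>

datatype 'c ctrace = FinT "'c list" | InfT "nat \<Rightarrow> 'c"

fun ctrace_len :: "'c ctrace \<Rightarrow> enat" where
  "ctrace_len (FinT xs) = enat (length xs)"
| "ctrace_len (InfT f) = \<infinity>"

text \<open>Contraction of maximal blocks of equal consecutive colours.\<close>
definition contract_fin :: "'c list \<Rightarrow> 'c ctrace" where
  "contract_fin xs = FinT (remdups_adj xs)"

definition contract_inf :: "(nat \<Rightarrow> 'c) \<Rightarrow> 'c ctrace" where
  "contract_inf f =
     (let P = {n. n = 0 \<or> f n \<noteq> f (n - 1)}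
      in if finite P then FinT (map f (sorted_list_of_set P))
         else InfT (f \<circ> enumerate P))"

definition fin_path :: "('s \<Rightarrow> 's \<Rightarrow> bool) \<Rightarrow> 's \<Rightarrow> 's list \<Rightarrow> bool" where
  "fin_path R s xs \<longleftrightarrow> xs \<noteq> [] \<and> hd xs = s \<and>
     (\<forall>i. Suc i < length xs \<longrightarrow> R (xs ! i) (xs ! Suc i))"

definition inf_path :: "('s \<Rightarrow> 's \<Rightarrow> bool) \<Rightarrow> 's \<Rightarrow> (nat \<Rightarrow> 's) \<Rightarrow> bool" where
  "inf_path R s f \<longleftrightarrow> f 0 = s \<and> (\<forall>n. R (f n) (f (Suc n)))"

definition ctraces :: "('s \<Rightarrow> 's \<Rightarrow> bool) \<Rightarrow> ('s \<Rightarrow> 'c) \<Rightarrow> 's \<Rightarrow> 'c ctrace set" where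
  "ctraces R C s =
     {contract_fin (map C xs) | xs. fin_path R s xs} \<union>
     {contract_inf (C \<circ> f) | f. inf_path R s f}"

definition complete_ctraces :: "('s \<Rightarrow> 's \<Rightarrow> bool) \<Rightarrow> ('s \<Rightarrow> 'c) \<Rightarrow> 's \<Rightarrow> 'c ctrace set" where
  "complete_ctraces R C s =
     {contract_fin (map C xs) | xs. fin_path R s xs \<and> (\<forall>t. \<not> R (last xs) t)} \<union>
     {contract_inf (C \<circ> f) | f. inf_path R s f}"

definition fully_consistent ::
  "('s \<Rightarrow> 'ap set) \<Rightarrow> ('s \<Rightarrow> 's \<Rightarrow> bool) \<Rightarrow> ('s \<Rightarrow> 'c) \<Rightarrow> bool" where
  "fully_consistent L R C \<longleftrightarrow>
     (\<forall>s t. C s = C t \<longrightarrow> L s = L t \<and> complete_ctraces R C s = complete_ctraces R C t)"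

end

theory Submission
  imports Defs
begin

lemma filter_remdups_adj:
  "map f (filter (\<lambda>n. n = 0 \<or> f n \<noteq> f (n - 1)) [0..<Suc m]) = remdups_adj (map f [0..<Suc m])"
proof (induction m)
  case 0 then show ?case by simp
next
  case (Suc m)
  have "remdups_adj (map f [0..<Suc (Suc m)]) = remdups_adj (map f [0..<Suc m] @ [f (Suc m)])" by simp
  also have "\<dots> = remdups_adj (map f [0..<Suc m]) @ remdups_adj (dropWhile (\<lambda>y. y = f m) [f (Suc m)])"
    by (subst remdups_adj_append'') (auto simp: last_map)
  also have "\<dots> = map f (filter (\<lambda>n. n = 0 \<or> f n \<noteq> f (n - 1)) [0..<Suc m]) @ (if f (Suc m) = f m then [] else [f (Suc m)])"
    using Suc.IH by simp
  also have "\<dots> = map f (filter (\<lambda>n. n = 0 \<or> f n \<noteq> f (n - 1)) [0..<Suc (Suc m)])"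
    by (simp only: upt_Suc_append[of 0 "Suc m"] filter_append map_append) (cases "f (Suc m) = f m"; simp)
  finally show ?case by simp
qed

lemma sls_set: "sorted xs \<Longrightarrow> distinct xs \<Longrightarrow> sorted_list_of_set (set xs) = xs"
  by (simp add: sorted_list_of_set_sort_remdups distinct_remdups_id sorted_sort_id)

lemma RED:
  assumes "\<forall>n\<ge>N. f n = f N"
  shows "contract_inf f = FinT (remdups_adj (map f [0..<Suc N]))"
proof -
  define Q where "Q = (\<lambda>n. n = 0 \<or> f n \<noteq> f (n - 1))"
  have P: "{n. n = 0 \<or> f n \<noteq> f (n - 1)} = set (filter Q [0..<Suc N])"
  proof (rule set_eqI)
    fix n
    have "n < Suc N" if "Q n"
    proof (rule ccontr)
      assume "\<not> n < Suc N"
      then have "n \<ge> N" "n - 1 \<ge> N" "n \<noteq> 0" by auto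
      then show False using that assms[rule_format, of n] assms[rule_format, of "n - 1"] by (auto simp: Q_def)
    qed
    then show "n \<in> {n. n = 0 \<or> f n \<noteq> f (n - 1)} \<longleftrightarrow> n \<in> set (filter Q [0..<Suc N])"
      by (auto simp: Q_def simp del: upt_Suc)
  qed
  have "sorted_list_of_set (set (filter Q [0..<Suc N])) = filter Q [0..<Suc N]"
    by (rule sls_set) (auto intro: sorted_wrt_filter simp del: upt_Suc)
  then show ?thesis unfolding contract_inf_def Let_def P
    using filter_remdups_adj[of f N] by (simp add: Q_def)
qed

lemma fin_changes:
  assumes "contract_inf f = FinT l"
  shows "\<exists>N. \<forall>n\<ge>N. f n = f N"
proof -
  define P where "P = {n. n = 0 \<or> f n \<noteq> f (n - 1)}"
  have "finite P" using assms by (auto simp: contract_inf_def Let_def P_def split: if_splits)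
  define N where "N = Max P"
  have "f n = f N" if "n \<ge> N" for n
    using that
  proof (induction n rule: dec_induct)
    case (step m)
    have "Suc m \<notin> P"
    proof
      assume "Suc m \<in> P"
      then have "Suc m \<le> N" using \<open>finite P\<close> Max_ge[of P "Suc m"] unfolding N_def by blast
      then show False using step.hyps(1) by simp
    qed
    then show ?case using step by (simp add: P_def)
  qed simp
  then show ?thesis by blast
qed

lemma inf_changes:
  assumes "contract_inf f = InfT h"
  shows "infinite {n. n = 0 \<or> f n \<noteq> f (n - 1)} \<and> h = f \<circ> enumerate {n. n = 0 \<or> f n \<noteq> f (n - 1)}"
  using assms by (auto simp: contract_inf_def Let_def split: if_splits)

definition seg :: "('s \<Rightarrow> 's \<Rightarrow> bool) \<Rightarrow> ('s \<Rightarrow> 'c) \<Rightarrow> 's \<Rightarrow> 's list \<Rightarrow> 's \<Rightarrow> bool" where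
  "seg R C x ys y \<longleftrightarrow> fin_path R x ys \<and> (\<forall>z\<in>set ys. C z = C x) \<and> R (last ys) y \<and> C y \<noteq> C x"

lemma RA:
  assumes "ys \<noteq> []" "\<forall>y\<in>set ys. y = c" "zs = [] \<or> hd zs \<noteq> c"
  shows "remdups_adj (ys @ zs) = c # remdups_adj zs"
  using assms
proof (induction ys)
  case Nil then show ?case by simp
next
  case (Cons y ys)
  show ?case
  proof (cases ys)
    case Nil
    then show ?thesis using Cons.prems
      by (cases zs) (auto simp: remdups_adj_Cons')
  next
    case (Cons y' ys')
    then have "remdups_adj ((y # ys) @ zs) = remdups_adj (ys @ zs)"
      using Cons.prems by simp
    then show ?thesis using Cons.IH Cons.prems \<open>ys = y' # ys'\<close> by simp
  qed
qed

lemma DEC: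
  assumes fp: "fin_path R s xs" and ex: "\<exists>x\<in>set xs. C x \<noteq> C s"
  shows "\<exists>i. 0 < i \<and> i < length xs \<and> seg R C s (take i xs) (xs ! i) \<and> fin_path R (xs ! i) (drop i xs)
    \<and> remdups_adj (map C xs) = C s # remdups_adj (map C (drop i xs)) \<and> last (drop i xs) = last xs"
proof -
  from ex obtain j where j: "j < length xs" "C (xs ! j) \<noteq> C s" by (auto simp: in_set_conv_nth)
  define i where "i = (LEAST i. i < length xs \<and> C (xs ! i) \<noteq> C s)"
  have i: "i < length xs" "C (xs ! i) \<noteq> C s"
    using LeastI_ex[of "\<lambda>i. i < length xs \<and> C (xs ! i) \<noteq> C s"] j
    unfolding i_def by blast+
  have before: "C (xs ! k) = C s" if "k < i" for k
    using not_less_Least[of k "\<lambda>i. i < length xs \<and> C (xs ! i) \<noteq> C s"] that i unfolding i_def[symmetric] by auto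
  have xs0: "xs ! 0 = s" using fp by (auto simp: fin_path_def hd_conv_nth)
  have "i \<noteq> 0"
  proof
    assume "i = 0"
    then show False using i(2) xs0 by simp
  qed
  then have ipos: "0 < i" by simp
  have step: "R (xs ! k) (xs ! Suc k)" if "Suc k < length xs" for k
    using fp that by (auto simp: fin_path_def)
  have "seg R C s (take i xs) (xs ! i)"
    unfolding seg_def fin_path_def
  proof (intro conjI allI impI ballI)
    show "take i xs \<noteq> []" using ipos i by auto
    show "hd (take i xs) = s" using ipos i fp by (simp add: fin_path_def)
    fix k assume "Suc k < length (take i xs)"
    then show "R (take i xs ! k) (take i xs ! Suc k)" using step by auto
  next
    fix z assume "z \<in> set (take i xs)"
    then obtain k where "k < i" "z = xs ! k" using i by (auto simp: in_set_conv_nth)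
    then show "C z = C s" using before by auto
  next
    have "last (take i xs) = xs ! (i - 1)" using ipos i by (subst last_conv_nth) auto
    then show "R (last (take i xs)) (xs ! i)" using step[of "i - 1"] ipos i by auto
    show "C (xs ! i) \<noteq> C s" by (rule i(2))
  qed
  moreover have "fin_path R (xs ! i) (drop i xs)"
    unfolding fin_path_def using i step by (auto simp: hd_drop_conv_nth)
  moreover have "remdups_adj (map C xs) = C s # remdups_adj (map C (drop i xs))"
  proof -
    have "map C xs = map C (take i xs) @ map C (drop i xs)" by (simp flip: map_append)
    moreover have "remdups_adj (map C (take i xs) @ map C (drop i xs)) = C s # remdups_adj (map C (drop i xs))"
    proof (rule RA)
      show "map C (take i xs) \<noteq> []" using ipos i by auto
      show "\<forall>y\<in>set (map C (take i xs)). y = C s" using before by (auto simp: in_set_conv_nth)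
      show "map C (drop i xs) = [] \<or> hd (map C (drop i xs)) \<noteq> C s" using i by (auto simp: hd_drop_conv_nth hd_map)
    qed
    ultimately show ?thesis by simp
  qed
  moreover have "last (drop i xs) = last xs" using i by simp
  ultimately show ?thesis using ipos i by blast
qed

lemma enumerate_range:
  fixes q :: "nat \<Rightarrow> nat"
  assumes "strict_mono q"
  shows "enumerate (range q) k = q k"
proof (induction k)
  case 0
  have "(LEAST n. n \<in> range q) = q 0"
  proof (rule Least_equality)
    fix y assume "y \<in> range q"
    then obtain j where "y = q j" by auto
    then show "q 0 \<le> y" using assms by (simp add: strict_mono_less_eq)
  qed auto
  then show ?case by (simp add: enumerate_0)
next
  case (Suc k)
  have inf: "infinite (range q)" using assms strict_mono_imp_inj_on range_inj_infinite by blast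
  have "(LEAST s. s \<in> range q \<and> q k < s) = q (Suc k)"
  proof (rule Least_equality)
    show "q (Suc k) \<in> range q \<and> q k < q (Suc k)" using assms by (auto simp: strict_mono_def)
    fix y assume "y \<in> range q \<and> q k < y"
    then obtain j where "y = q j" "q k < q j" by auto
    then have "k < j" using assms by (simp add: strict_mono_less)
    then show "q (Suc k) \<le> y" using assms \<open>y = q j\<close> by (simp add: strict_mono_less_eq)
  qed
  then show ?case using Suc enumerate_Suc''[OF inf, of k] by simp
qed

lemma nth_last: "Suc i = length ys \<Longrightarrow> ys ! i = last ys"
  by (cases ys rule: rev_cases) (auto simp: nth_append)

definition pre :: "'s list \<Rightarrow> (nat \<Rightarrow> 's) \<Rightarrow> nat \<Rightarrow> 's" where
  "pre ys g n = (if n < length ys then ys ! n else g (n - length ys))"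

lemma map_pre: "map (pre ys g) [0..<length ys + m] = ys @ map g [0..<m]"
  by (rule nth_equalityI) (auto simp: pre_def nth_append)

lemma fin_path_append:
  assumes "fin_path R x ys" "R (last ys) y" "fin_path R y zs"
  shows "fin_path R x (ys @ zs)"
  unfolding fin_path_def
proof (intro conjI allI impI)
  show "ys @ zs \<noteq> []" using assms by (auto simp: fin_path_def)
  show "hd (ys @ zs) = x" using assms by (auto simp: fin_path_def)
  fix i assume i: "Suc i < length (ys @ zs)"
  consider "Suc i < length ys" | "Suc i = length ys" | "Suc i > length ys" by linarith
  then show "R ((ys @ zs) ! i) ((ys @ zs) ! Suc i)"
  proof cases
    case 1 then show ?thesis using assms(1) by (auto simp: fin_path_def nth_append)
  next
    case 2
    then have "(ys @ zs) ! i = last ys" using 2 by (auto simp: nth_append nth_last)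
    moreover have "(ys @ zs) ! Suc i = y" using 2 assms(3) by (auto simp: nth_append fin_path_def hd_conv_nth)
    ultimately show ?thesis using assms(2) by simp
  next
    case 3
    then have "(ys @ zs) ! i = zs ! (i - length ys)" "(ys @ zs) ! Suc i = zs ! Suc (i - length ys)"
      by (auto simp: nth_append Suc_diff_le)
    moreover have "Suc (i - length ys) < length zs" using 3 i by auto
    ultimately show ?thesis using assms(3) by (auto simp: fin_path_def)
  qed
qed

lemma inf_path_pre:
  assumes "fin_path R x ys" "R (last ys) y" "inf_path R y g"
  shows "inf_path R x (pre ys g)"
  unfolding inf_path_def
proof (intro conjI allI)
  show "pre ys g 0 = x" using assms(1) by (auto simp: pre_def fin_path_def hd_conv_nth)
  fix n
  consider "Suc n < length ys" | "Suc n = length ys" | "Suc n > length ys" by linarith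
  then show "R (pre ys g n) (pre ys g (Suc n))"
  proof cases
    case 1 then show ?thesis using assms(1) by (auto simp: fin_path_def pre_def)
  next
    case 2
    then have "pre ys g n = last ys" by (auto simp: pre_def nth_last)
    moreover have "pre ys g (Suc n) = y" using 2 assms(3) by (auto simp: pre_def inf_path_def)
    ultimately show ?thesis using assms(2) by simp
  next
    case 3
    then have "pre ys g n = g (n - length ys)" "pre ys g (Suc n) = g (Suc (n - length ys))"
      by (auto simp: pre_def Suc_diff_le)
    then show ?thesis using assms(3) by (auto simp: inf_path_def)
  qed
qed

lemma fin_path_prefix: "inf_path R y f \<Longrightarrow> fin_path R y (map f [0..<Suc N])"
  by (auto simp: inf_path_def fin_path_def hd_map simp del: upt_Suc)

lemma CONCAT_INF:
  assumes S: "\<And>k. seg R C (v k) (segs k) (v (Suc k))"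
  shows "\<exists>g. inf_path R (v 0) g \<and> contract_inf (C \<circ> g) = InfT (C \<circ> v)"
proof -
  define q where "q k = (\<Sum>i<k. length (segs i))" for k
  have len: "length (segs k) > 0" for k using S[of k] by (auto simp: seg_def fin_path_def)
  have qS: "q (Suc k) = q k + length (segs k)" for k by (simp add: q_def)
  have q0: "q 0 = 0" by (simp add: q_def)
  have sm: "strict_mono q" unfolding strict_mono_Suc_iff using qS len by simp
  have qge: "k \<le> q k" for k using strict_mono_imp_increasing[OF sm] by simp
  define idx where "idx n = (LEAST k. n < q (Suc k))" for n
  have idx_eq: "idx n = k" if "q k \<le> n" "n < q (Suc k)" for n k
    unfolding idx_def
  proof (rule Least_equality)
    show "n < q (Suc k)" by fact
    fix k' assume "n < q (Suc k')"
    show "k \<le> k'"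
    proof (rule ccontr)
      assume "\<not> k \<le> k'"
      then have "q (Suc k') \<le> q k" using sm by (simp add: strict_mono_less_eq)
      then show False using that \<open>n < q (Suc k')\<close> by simp
    qed
  qed
  have blk: "\<exists>k. q k \<le> n \<and> n < q (Suc k)" for n
  proof -
    have ex: "\<exists>k. n < q (Suc k)" using qge[of "Suc n"] by (intro exI[of _ n]) simp
    have a: "n < q (Suc (idx n))" unfolding idx_def by (rule LeastI_ex[OF ex])
    have b: "q (idx n) \<le> n"
    proof (cases "idx n")
      case 0 then show ?thesis using q0 by simp
    next
      case (Suc k')
      have "\<not> n < q (Suc k')" using not_less_Least[of k' "\<lambda>k. n < q (Suc k)"] Suc unfolding idx_def by simp
      then show ?thesis using Suc by simp
    qed
    from a b show ?thesis by blast
  qed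
  define g where "g n = segs (idx n) ! (n - q (idx n))" for n
  have gk: "g n = segs k ! (n - q k)" "n - q k < length (segs k)" if "q k \<le> n" "n < q (Suc k)" for n k
    using idx_eq[OF that] that qS[of k] unfolding g_def by auto
  have gq: "g (q k) = v k" for k
    using gk[of k "q k"] sm len[of k] S[of k] qS[of k]
    by (auto simp: seg_def fin_path_def hd_conv_nth)
  have col: "C (g n) = C (v k)" if "q k \<le> n" "n < q (Suc k)" for n k
    using gk[OF that] S[of k] by (auto simp: seg_def)
  have path: "inf_path R (v 0) g"
    unfolding inf_path_def
  proof (intro conjI allI)
    show "g 0 = v 0" using gq[of 0] q0 by simp
    fix n
    obtain k where k: "q k \<le> n" "n < q (Suc k)" using blk by blast
    show "R (g n) (g (Suc n))"
    proof (cases "Suc n < q (Suc k)")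
      case True
      have "g n = segs k ! (n - q k)" "g (Suc n) = segs k ! Suc (n - q k)"
        using gk[OF k] gk[of k "Suc n"] k True by (auto simp: Suc_diff_le)
      moreover have "Suc (n - q k) < length (segs k)" using True k qS[of k] by auto
      ultimately show ?thesis using S[of k] by (auto simp: seg_def fin_path_def)
    next
      case False
      then have e: "Suc n = q (Suc k)" using k by simp
      have "g n = last (segs k)" using gk[OF k] e qS[of k] k by (auto intro!: nth_last)
      moreover have "g (Suc n) = v (Suc k)" using e gq by simp
      ultimately show ?thesis using S[of k] by (auto simp: seg_def)
    qed
  qed
  have P: "{n. n = 0 \<or> (C \<circ> g) n \<noteq> (C \<circ> g) (n - 1)} = range q"
  proof (rule set_eqI, rule iffI)
    fix n assume n: "n \<in> {n. n = 0 \<or> (C \<circ> g) n \<noteq> (C \<circ> g) (n - 1)}"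
    obtain k where k: "q k \<le> n" "n < q (Suc k)" using blk by blast
    show "n \<in> range q"
    proof (cases "n = q k")
      case False
      then have "q k \<le> n - 1" "n - 1 < q (Suc k)" "n \<noteq> 0" using k by auto
      then have "C (g n) = C (g (n - 1))" using col[OF k] col[of k "n - 1"] by simp
      then show ?thesis using n \<open>n \<noteq> 0\<close> by simp
    qed simp
  next
    fix n assume "n \<in> range q"
    then obtain k where n: "n = q k" by auto
    show "n \<in> {n. n = 0 \<or> (C \<circ> g) n \<noteq> (C \<circ> g) (n - 1)}"
    proof (cases k)
      case 0 then show ?thesis using n q0 by simp
    next
      case (Suc j)
      have L: "length (segs j) \<ge> 1" using len[of j] by linarith
      have "q j \<le> q k - 1" "q k - 1 < q (Suc j)" using Suc qS[of j] L by auto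
      then have "C (g (q k - 1)) = C (v j)" using col by blast
      moreover have "C (g (q k)) = C (v k)" using gq by simp
      moreover have "C (v k) \<noteq> C (v j)" using S[of j] Suc by (auto simp: seg_def)
      ultimately show ?thesis using n by auto
    qed
  qed
  have inf: "infinite (range q)" using sm strict_mono_imp_inj_on range_inj_infinite by blast
  have "contract_inf (C \<circ> g) = InfT (C \<circ> g \<circ> enumerate (range q))"
    unfolding contract_inf_def Let_def P using inf by simp
  also have "C \<circ> g \<circ> enumerate (range q) = C \<circ> v"
    using enumerate_range[OF sm] gq by (auto simp: fun_eq_iff)
  finally show ?thesis using path by blast
qed

lemma fin_trace_path:
  assumes "FinT l \<in> ctraces R C y"
  shows "\<exists>zs. fin_path R y zs \<and> l = remdups_adj (map C zs)"
  using assms unfolding ctraces_def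
proof (elim UnE CollectE exE conjE)
  fix zs assume "FinT l = contract_fin (map C zs)" "fin_path R y zs"
  then show ?thesis by (auto simp: contract_fin_def)
next
  fix f assume a: "FinT l = contract_inf (C \<circ> f)" "inf_path R y f"
  then obtain N where "\<forall>n\<ge>N. (C \<circ> f) n = (C \<circ> f) N" using fin_changes[OF a(1)[symmetric]] by blast
  then have "contract_inf (C \<circ> f) = FinT (remdups_adj (map (C \<circ> f) [0..<Suc N]))" by (rule RED)
  then show ?thesis using a fin_path_prefix[OF a(2), of N] by (intro exI[of _ "map f [0..<Suc N]"]) auto
qed

lemma fin_ctrace_complete_path:
  assumes "FinT l \<in> complete_ctraces R C y"
  shows "(\<exists>zs. fin_path R y zs \<and> (\<forall>t. \<not> R (last zs) t) \<and> l = remdups_adj (map C zs))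
    \<or> (\<exists>f N. inf_path R y f \<and> (\<forall>n\<ge>N. C (f n) = C (f N)) \<and> l = remdups_adj (map C (map f [0..<Suc N])))"
  using assms unfolding complete_ctraces_def
proof (elim UnE CollectE exE conjE)
  fix zs assume "FinT l = contract_fin (map C zs)" "fin_path R y zs" "\<forall>t. \<not> R (last zs) t"
  then show ?thesis by (auto simp: contract_fin_def)
next
  fix f assume a: "FinT l = contract_inf (C \<circ> f)" "inf_path R y f"
  then obtain N where N: "\<forall>n\<ge>N. (C \<circ> f) n = (C \<circ> f) N" using fin_changes[OF a(1)[symmetric]] by blast
  then have "contract_inf (C \<circ> f) = FinT (remdups_adj (map (C \<circ> f) [0..<Suc N]))" by (rule RED)
  then have "l = remdups_adj (map C (map f [0..<Suc N]))" using a(1) by (simp add: map_map)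
  moreover have "\<forall>n\<ge>N. C (f n) = C (f N)" using N unfolding comp_def .
  ultimately show ?thesis using a(2) by blast
qed

lemma all_same: "xs \<noteq> [] \<Longrightarrow> \<forall>x\<in>set xs. C x = c \<Longrightarrow> remdups_adj (map C xs) = [c]"
  using RA[of "map C xs" c "[]"] by auto

lemma SEG_TRACE:
  assumes "seg R C x ys y"
  shows "FinT [C x, C y] \<in> ctraces R C x"
proof -
  have "fin_path R x (ys @ [y])"
    using assms by (intro fin_path_append) (auto simp: seg_def fin_path_def)
  moreover have "remdups_adj (map C (ys @ [y])) = [C x, C y]"
    using RA[of "map C ys" "C x" "[C y]"] assms by (auto simp: seg_def fin_path_def)
  ultimately show ?thesis unfolding ctraces_def contract_fin_def
    by (intro UnI1 CollectI exI[of _ "ys @ [y]"]) simp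
qed

lemma EXTRACT:
  assumes "FinT [c, d] \<in> ctraces R C y"
  shows "\<exists>ys y'. seg R C y ys y' \<and> C y' = d"
proof -
  obtain zs where zs: "fin_path R y zs" "[c, d] = remdups_adj (map C zs)"
    using fin_trace_path[OF assms] by blast
  have "\<exists>x\<in>set zs. C x \<noteq> C y"
  proof (rule ccontr)
    assume "\<not> ?thesis"
    then have "remdups_adj (map C zs) = [C y]" using zs(1) by (intro all_same) (auto simp: fin_path_def)
    then show False using zs(2) by simp
  qed
  from DEC[OF zs(1) this] obtain i where i: "0 < i" "i < length zs" "seg R C y (take i zs) (zs ! i)"
    "remdups_adj (map C zs) = C y # remdups_adj (map C (drop i zs))" by blast
  have "hd (remdups_adj (map C (drop i zs))) = C (zs ! i)"
    using i(2) by (simp add: hd_map hd_drop_conv_nth)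
  moreover have "remdups_adj (map C (drop i zs)) = [d]" using zs(2) i(4) by simp
  ultimately have "C (zs ! i) = d" by simp
  then show ?thesis using i(3) by blast
qed

lemma STEP:
  assumes H2: "\<forall>s t. C s = C t \<longrightarrow> {\<tau> \<in> ctraces R C s. ctrace_len \<tau> = 2} = {\<tau> \<in> ctraces R C t. ctrace_len \<tau> = 2}"
    and "C x = C y" "seg R C x xs x'"
  shows "\<exists>ys y'. seg R C y ys y' \<and> C y' = C x'"
proof -
  have "FinT [C x, C x'] \<in> {\<tau> \<in> ctraces R C x. ctrace_len \<tau> = 2}"
    using SEG_TRACE[OF assms(3)] by (simp add: numeral_eq_enat)
  then have "FinT [C x, C x'] \<in> ctraces R C y" using H2 assms(2) by blast
  then show ?thesis by (rule EXTRACT)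
qed

lemma CONCAT_FIN:
  assumes "seg R C t ys u" "FinT l \<in> complete_ctraces R C u"
  shows "FinT (C t # l) \<in> complete_ctraces R C t"
proof -
  have ys: "fin_path R t ys" "\<forall>z\<in>set ys. C z = C t" "R (last ys) u" "C u \<noteq> C t" "ys \<noteq> []"
    using assms(1) by (auto simp: seg_def fin_path_def)
  have RA': "remdups_adj (map C ys @ map C zs) = C t # remdups_adj (map C zs)" if "fin_path R u zs" for zs
    using RA[of "map C ys" "C t" "map C zs"] ys that by (auto simp: fin_path_def hd_map)
  from fin_ctrace_complete_path[OF assms(2)] show ?thesis
  proof (elim disjE exE conjE)
    fix zs assume zs: "fin_path R u zs" "\<forall>t. \<not> R (last zs) t" "l = remdups_adj (map C zs)"
    have "fin_path R t (ys @ zs)" using fin_path_append ys zs by metis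
    moreover have "last (ys @ zs) = last zs" using zs by (auto simp: fin_path_def)
    moreover have "remdups_adj (map C (ys @ zs)) = C t # l" using RA'[OF zs(1)] zs(3) by simp
    ultimately show ?thesis unfolding complete_ctraces_def contract_fin_def
      using zs(2) by (intro UnI1 CollectI exI[of _ "ys @ zs"]) simp
  next
    fix f N assume f: "inf_path R u f" "\<forall>n\<ge>N. C (f n) = C (f N)" "l = remdups_adj (map C (map f [0..<Suc N]))"
    define h where "h = pre ys f"
    have hp: "inf_path R t h" unfolding h_def using inf_path_pre ys f by metis
    have hc: "\<forall>n\<ge>length ys + N. (C \<circ> h) n = (C \<circ> h) (length ys + N)"
    proof (intro allI impI)
      fix n assume "length ys + N \<le> n"
      then have "h n = f (n - length ys)" "h (length ys + N) = f N" "n - length ys \<ge> N"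
        by (auto simp: h_def pre_def)
      then show "(C \<circ> h) n = (C \<circ> h) (length ys + N)" using f(2)[rule_format, of "n - length ys"] by simp
    qed
    have "contract_inf (C \<circ> h) = FinT (remdups_adj (map (C \<circ> h) [0..<Suc (length ys + N)]))"
      by (rule RED[OF hc])
    also have "map (C \<circ> h) [0..<Suc (length ys + N)] = map C ys @ map C (map f [0..<Suc N])"
      using map_pre[of ys f "Suc N"] unfolding h_def by (simp flip: map_map del: upt_Suc)
    also have "remdups_adj (map C ys @ map C (map f [0..<Suc N])) = C t # l"
      using RA'[OF fin_path_prefix[OF f(1)]] f(3) by simp
    finally have "contract_inf (C \<circ> h) = FinT (C t # l)" .
    then show ?thesis unfolding complete_ctraces_def using hp
      by (intro UnI2 CollectI exI[of _ h]) simp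
  qed
qed

lemma FIN:
  assumes H1: "\<forall>s t. C s = C t \<longrightarrow> {\<tau> \<in> complete_ctraces R C s. ctrace_len \<tau> = 1} = {\<tau> \<in> complete_ctraces R C t. ctrace_len \<tau> = 1}"
    and H2: "\<forall>s t. C s = C t \<longrightarrow> {\<tau> \<in> ctraces R C s. ctrace_len \<tau> = 2} = {\<tau> \<in> ctraces R C t. ctrace_len \<tau> = 2}"
  shows "fin_path R s xs \<Longrightarrow> FinT [C (last xs)] \<in> complete_ctraces R C (last xs) \<Longrightarrow> C s = C t
    \<Longrightarrow> FinT (remdups_adj (map C xs)) \<in> complete_ctraces R C t"
proof (induction "length xs" arbitrary: s t xs rule: less_induct)
  case less
  show ?case
  proof (cases "\<exists>x\<in>set xs. C x \<noteq> C s")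
    case False
    have ne: "xs \<noteq> []" using less.prems by (auto simp: fin_path_def)
    then have r: "remdups_adj (map C xs) = [C s]" using False by (intro all_same) auto
    have "C (last xs) = C s" using False ne by auto
    then have "C (last xs) = C t" using less.prems by simp
    moreover have "FinT [C (last xs)] \<in> {\<tau> \<in> complete_ctraces R C (last xs). ctrace_len \<tau> = 1}"
      using less.prems by (simp add: one_enat_def)
    ultimately have "FinT [C (last xs)] \<in> complete_ctraces R C t" using H1 by blast
    then show ?thesis using r \<open>C (last xs) = C s\<close> by simp
  next
    case True
    from DEC[OF less.prems(1) True] obtain i where i: "0 < i" "i < length xs" "seg R C s (take i xs) (xs ! i)"
      "fin_path R (xs ! i) (drop i xs)" "remdups_adj (map C xs) = C s # remdups_adj (map C (drop i xs))"
      "last (drop i xs) = last xs" by blast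
    obtain ys u where u: "seg R C t ys u" "C u = C (xs ! i)"
      using STEP[OF H2 less.prems(3) i(3)] by blast
    have "FinT (remdups_adj (map C (drop i xs))) \<in> complete_ctraces R C u"
      using less.hyps[of "drop i xs" "xs ! i" u] i less.prems u by simp
    from CONCAT_FIN[OF u(1) this] show ?thesis using i(5) less.prems(3) by simp
  qed
qed

lemma CONSTR:
  assumes H2: "\<forall>s t. C s = C t \<longrightarrow> {\<tau> \<in> ctraces R C s. ctrace_len \<tau> = 2} = {\<tau> \<in> ctraces R C t. ctrace_len \<tau> = 2}"
    and X: "\<forall>k. \<exists>ys. seg R C (x k) ys (x (Suc k))" and T: "C t = C (x 0)"
  shows "\<exists>g. inf_path R t g \<and> contract_inf (C \<circ> g) = InfT (C \<circ> x)"
proof -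
  define v where "v = rec_nat t (\<lambda>k y. SOME y'. \<exists>ys. seg R C y ys y' \<and> C y' = C (x (Suc k)))"
  have v0: "v 0 = t" by (simp add: v_def)
  have vS: "v (Suc k) = (SOME y'. \<exists>ys. seg R C (v k) ys y' \<and> C y' = C (x (Suc k)))" for k
    by (simp add: v_def)
  have ex: "\<exists>y'. \<exists>ys. seg R C (v k) ys y' \<and> C y' = C (x (Suc k))" if "C (v k) = C (x k)" for k
  proof -
    obtain xs where "seg R C (x k) xs (x (Suc k))" using X by blast
    from STEP[OF H2 _ this, of "v k"] that show ?thesis by auto
  qed
  have col: "C (v k) = C (x k)" for k
  proof (induction k)
    case 0 then show ?case using v0 T by simp
  next
    case (Suc k)
    from someI_ex[OF ex[OF Suc]] show ?case unfolding vS by blast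
  qed
  have "\<forall>k. \<exists>ys. seg R C (v k) ys (v (Suc k))"
  proof
    fix k
    from someI_ex[OF ex[OF col[of k]]] show "\<exists>ys. seg R C (v k) ys (v (Suc k))" unfolding vS by blast
  qed
  then obtain segs where "\<forall>k. seg R C (v k) (segs k) (v (Suc k))" by metis
  from CONCAT_INF[of R C v segs] this obtain g where "inf_path R (v 0) g" "contract_inf (C \<circ> g) = InfT (C \<circ> v)"
    by blast
  moreover have "C \<circ> v = C \<circ> x" using col by (simp add: fun_eq_iff)
  ultimately show ?thesis using v0 by auto
qed

lemma INFCASE:
  assumes H2: "\<forall>s t. C s = C t \<longrightarrow> {\<tau> \<in> ctraces R C s. ctrace_len \<tau> = 2} = {\<tau> \<in> ctraces R C t. ctrace_len \<tau> = 2}"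
    and f: "inf_path R s f" and inf: "infinite {n. n = 0 \<or> (C \<circ> f) n \<noteq> (C \<circ> f) (n - 1)}"
    and st: "C s = C t"
  shows "contract_inf (C \<circ> f) \<in> complete_ctraces R C t"
proof -
  define P where "P = {n. n = 0 \<or> (C \<circ> f) n \<noteq> (C \<circ> f) (n - 1)}"
  define p where "p = enumerate P"
  have infP: "infinite P" using inf by (simp add: P_def)
  have sm: "strict_mono p" unfolding p_def using strict_mono_enumerate[OF infP] .
  have rg: "range p = P" unfolding p_def using range_enumerate[OF infP] .
  have p0: "p 0 = 0" unfolding p_def enumerate_0 by (rule Least_equality) (auto simp: P_def)
  have fR: "R (f n) (f (Suc n))" for n using f by (simp add: inf_path_def)
  have blk: "C (f n) = C (f (p k))" if "p k \<le> n" "n < p (Suc k)" for n k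
    using that
  proof (induction n rule: dec_induct)
    case (step m)
    have "Suc m \<notin> P"
    proof
      assume "Suc m \<in> P"
      then obtain j where j: "Suc m = p j" using rg by auto
      have "p k < p j" "p j < p (Suc k)" using step j by auto
      then have "k < j" "j < Suc k" using sm by (auto simp: strict_mono_less)
      then show False by simp
    qed
    then have "C (f (Suc m)) = C (f m)" by (simp add: P_def)
    then show ?case using step by simp
  qed simp
  have segk: "seg R C (f (p k)) (map f [p k..<p (Suc k)]) (f (p (Suc k)))" for k
  proof -
    have lt: "p k < p (Suc k)" using sm by (simp add: strict_mono_def)
    have pm: "p (Suc k) - 1 < p (Suc k)" "p k \<le> p (Suc k) - 1" using lt by auto
    have "p (Suc k) \<in> P" using rg by auto
    moreover have "p (Suc k) \<noteq> 0" using lt by simp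
    ultimately have ch: "C (f (p (Suc k))) \<noteq> C (f (p (Suc k) - 1))" by (simp add: P_def)
    show ?thesis unfolding seg_def fin_path_def
    proof (intro conjI allI impI ballI)
      show "map f [p k..<p (Suc k)] \<noteq> []" using lt by simp
      show "hd (map f [p k..<p (Suc k)]) = f (p k)" using lt by (simp add: hd_map)
      fix i assume "Suc i < length (map f [p k..<p (Suc k)])"
      then show "R (map f [p k..<p (Suc k)] ! i) (map f [p k..<p (Suc k)] ! Suc i)"
        using fR[of "p k + i"] by simp
    next
      fix z assume "z \<in> set (map f [p k..<p (Suc k)])"
      then obtain n where "z = f n" "p k \<le> n" "n < p (Suc k)" by auto
      then show "C z = C (f (p k))" using blk by simp
    next
      have "last (map f [p k..<p (Suc k)]) = f (p (Suc k) - 1)" using lt by (simp add: last_map)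
      moreover have "Suc (p (Suc k) - 1) = p (Suc k)" using lt by simp
      ultimately show "R (last (map f [p k..<p (Suc k)])) (f (p (Suc k)))" using fR[of "p (Suc k) - 1"] by simp
      show "C (f (p (Suc k))) \<noteq> C (f (p k))" using ch blk[OF pm(2) pm(1)] by simp
    qed
  qed
  have "C t = C ((f \<circ> p) 0)" using st f p0 by (simp add: inf_path_def)
  have X: "\<forall>k. \<exists>ys. seg R C ((f \<circ> p) k) ys ((f \<circ> p) (Suc k))" using segk by auto
  from CONSTR[OF H2 X \<open>C t = C ((f \<circ> p) 0)\<close>] obtain g where g: "inf_path R t g" "contract_inf (C \<circ> g) = InfT (C \<circ> (f \<circ> p))"
    by blast
  have "contract_inf (C \<circ> f) = InfT (C \<circ> f \<circ> p)"
    unfolding contract_inf_def Let_def using infP unfolding P_def p_def by simp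
  then have "contract_inf (C \<circ> f) = contract_inf (C \<circ> g)" using g(2) by (simp add: comp_assoc)
  then show ?thesis unfolding complete_ctraces_def using g(1) by blast
qed

lemma SUB:
  assumes H1: "\<forall>s t. C s = C t \<longrightarrow> {\<tau> \<in> complete_ctraces R C s. ctrace_len \<tau> = 1} = {\<tau> \<in> complete_ctraces R C t. ctrace_len \<tau> = 1}"
    and H2: "\<forall>s t. C s = C t \<longrightarrow> {\<tau> \<in> ctraces R C s. ctrace_len \<tau> = 2} = {\<tau> \<in> ctraces R C t. ctrace_len \<tau> = 2}"
    and tau: "\<tau> \<in> complete_ctraces R C s" and st: "C s = C t"
  shows "\<tau> \<in> complete_ctraces R C t"
  using tau unfolding complete_ctraces_def[of R C s]
proof (elim UnE CollectE exE conjE)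
  fix xs assume xs: "\<tau> = contract_fin (map C xs)" "fin_path R s xs" "\<forall>t. \<not> R (last xs) t"
  have "fin_path R (last xs) [last xs]" by (simp add: fin_path_def)
  then have "FinT [C (last xs)] \<in> complete_ctraces R C (last xs)"
    unfolding complete_ctraces_def contract_fin_def using xs(3)
    by (intro UnI1 CollectI exI[of _ "[last xs]"]) simp
  from FIN[OF H1 H2 xs(2) this st] show ?thesis using xs(1) by (simp add: contract_fin_def)
next
  fix f assume tf: "\<tau> = contract_inf (C \<circ> f)" and f: "inf_path R s f"
  show ?thesis
  proof (cases "finite {n. n = 0 \<or> (C \<circ> f) n \<noteq> (C \<circ> f) (n - 1)}")
    case False
    from INFCASE[OF H2 f False st] show ?thesis using tf by simp
  next
    case True
    then obtain l where "contract_inf (C \<circ> f) = FinT l" unfolding contract_inf_def Let_def by simp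
    from fin_changes[OF this] obtain N where N: "\<forall>n\<ge>N. (C \<circ> f) n = (C \<circ> f) N" by blast
    have t1: "\<tau> = FinT (remdups_adj (map C (map f [0..<Suc N])))" using RED[OF N] tf by (simp only: map_map)
    define xs where "xs = map f [0..<Suc N]"
    have lx: "last xs = f N" by (simp add: xs_def last_map del: upt_Suc)
    have fp: "fin_path R s xs" unfolding xs_def by (rule fin_path_prefix[OF f])
    have ip: "inf_path R (f N) (\<lambda>n. f (N + n))" using f by (simp add: inf_path_def)
    have "\<forall>n\<ge>0. (C \<circ> (\<lambda>n. f (N + n))) n = (C \<circ> (\<lambda>n. f (N + n))) 0"
    proof (intro allI impI)
      fix n :: nat
      show "(C \<circ> (\<lambda>n. f (N + n))) n = (C \<circ> (\<lambda>n. f (N + n))) 0"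
        using N[rule_format, of "N + n"] by simp
    qed
    from RED[OF this] have "contract_inf (C \<circ> (\<lambda>n. f (N + n))) = FinT [C (f N)]" by (simp add: comp_def)
    then have "FinT [C (last xs)] \<in> complete_ctraces R C (last xs)"
      unfolding lx complete_ctraces_def using ip by (intro UnI2 CollectI exI[of _ "\<lambda>n. f (N + n)"]) (simp add: comp_def)
    from FIN[OF H1 H2 fp this st] show ?thesis using t1 xs_def by simp
  qed
qed

theorem lemma2p6:
  fixes L :: "'s \<Rightarrow> 'ap set" and R :: "'s \<Rightarrow> 's \<Rightarrow> bool" and C :: "'s \<Rightarrow> 'c"
  assumes "\<forall>s t. C s = C t \<longrightarrow>
      L s = L t
    \<and> {\<tau> \<in> ctraces R C s. ctrace_len \<tau> = 2} = {\<tau> \<in> ctraces R C t. ctrace_len \<tau> = 2}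
    \<and> {\<tau> \<in> complete_ctraces R C s. ctrace_len \<tau> = 1}
      = {\<tau> \<in> complete_ctraces R C t. ctrace_len \<tau> = 1}"
  shows "fully_consistent L R C"
proof -
  have H1: "\<forall>s t. C s = C t \<longrightarrow> {\<tau> \<in> complete_ctraces R C s. ctrace_len \<tau> = 1} = {\<tau> \<in> complete_ctraces R C t. ctrace_len \<tau> = 1}"
    using assms by blast
  have H2: "\<forall>s t. C s = C t \<longrightarrow> {\<tau> \<in> ctraces R C s. ctrace_len \<tau> = 2} = {\<tau> \<in> ctraces R C t. ctrace_len \<tau> = 2}"
    using assms by blast
  show ?thesis unfolding fully_consistent_def
  proof (intro allI impI conjI)
    fix s t assume st: "C s = C t"
    show "L s = L t" using assms st by blast
    show "complete_ctraces R C s = complete_ctraces R C t"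
      using SUB[OF H1 H2 _ st] SUB[OF H1 H2 _ st[symmetric]] by blast
  qed
qed

end
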